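(* Let $\alpha>0$ be fixed. There is a constant $C>0$ (depending only on $\alpha$) such that the following holds. Let $\mathcal{R}=\{P_1,\dots,P_n\}$ be a set of $n$ pairwise disjoint, connected, $\alpha$-fat simple polygons in the plane, let $0<\varepsilon<1$, let $T^*$ be an optimal tour of $\mathcal{R}$ with length $L^*$, let $W_0$ be the axis-aligned bounding box of $T^*$, let $\mathcal{R}_{W_0}\subseteq\mathcal{R}$ be the set of regions lying entirely inside $W_0$, and let $\lambda(\mathcal{R}_{W_0})$ be the sum of the diameters of the regions in $\mathcal{R}_{W_0}$. Then $L^*\ge C\cdot \lambda(\mathcal{R}_{W_0})/\log(n/\varepsilon)$.
   Context: A region $P$ is $\alpha$-fat if $\mathrm{area}(P)\ge \alpha\,[\mathrm{diam}(P)]^2$. A tour of $\mathcal{R}$ is a closed curve in the plane that intersects every region; an optimal tour is one of minimum Euclidean length. *)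

theory Defs
  imports "HOL-Analysis.Analysis"
begin

text \<open>The plane is modelled as the complex numbers (Euclidean metric, Lebesgue measure).\<close>

fun polypath :: "complex list \<Rightarrow> real \<Rightarrow> complex" where
  "polypath [] = linepath 0 0"
| "polypath [a] = linepath a a"
| "polypath [a, b] = linepath a b"
| "polypath (a # b # c # xs) = linepath a b +++ polypath (b # c # xs)"

definition simple_polygon :: "complex set \<Rightarrow> bool" where
  "simple_polygon P \<longleftrightarrow>
     (\<exists>vs. length vs \<ge> 3 \<and> simple_path (polypath (vs @ [hd vs])) \<and>
        P = path_image (polypath (vs @ [hd vs])) \<union> inside (path_image (polypath (vs @ [hd vs]))))"

definition fat :: "real \<Rightarrow> complex set \<Rightarrow> bool" where
  "fat \<alpha> P \<longleftrightarrow> measure lebesgue P \<ge> \<alpha> * (diameter P)\<^sup>2"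

definition curve_length :: "(real \<Rightarrow> complex) \<Rightarrow> ereal" where
  "curve_length g = (SUP ts \<in> {ts. sorted ts \<and> set ts \<subseteq> {0..1}}.
      ereal (\<Sum>i < length ts - 1. dist (g (ts ! i)) (g (ts ! Suc i))))"

definition is_tour :: "complex set set \<Rightarrow> (real \<Rightarrow> complex) \<Rightarrow> bool" where
  "is_tour R g \<longleftrightarrow> path g \<and> pathfinish g = pathstart g \<and> (\<forall>P\<in>R. path_image g \<inter> P \<noteq> {})"

definition optimal_tour :: "complex set set \<Rightarrow> (real \<Rightarrow> complex) \<Rightarrow> bool" where
  "optimal_tour R g \<longleftrightarrow> is_tour R g \<and> (\<forall>h. is_tour R h \<longrightarrow> curve_length g \<le> curve_length h)"

definition bbox :: "complex set \<Rightarrow> complex set" where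
  "bbox S = cbox (Complex (Inf (Re ` S)) (Inf (Im ` S))) (Complex (Sup (Re ` S)) (Sup (Im ` S)))"

end

theory Submission
  imports Defs
begin


lemma cl_pair:
  assumes "a \<in> {0..1}" "b \<in> {0..1}"
  shows "ereal (dist (g a) (g b)) \<le> curve_length g"
proof -
  have gen: "ereal (dist (g x) (g y)) \<le> curve_length g" if "x \<le> y" "x \<in> {0..1}" "y \<in> {0..1}" for x y
  proof -
    have "[x,y] \<in> {ts. sorted ts \<and> set ts \<subseteq> {0..1}}" using that by auto
    then have "ereal (\<Sum>i < length [x,y] - 1. dist (g ([x,y] ! i)) (g ([x,y] ! Suc i))) \<le> curve_length g"
      unfolding curve_length_def by (rule SUP_upper)
    then show ?thesis by simp
  qed
  show ?thesis
  proof (cases "a \<le> b")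
    case True then show ?thesis using gen assms by auto
  next
    case False then show ?thesis using gen[of b a] assms by (auto simp: dist_commute)
  qed
qed

lemma cl_nonneg: "0 \<le> curve_length g"
proof -
  have "[] \<in> {ts. sorted ts \<and> set ts \<subseteq> {0..1::real}}" by auto
  then have "ereal (\<Sum>i < length ([]::real list) - 1. dist (g ([] ! i)) (g ([] ! Suc i))) \<le> curve_length g"
    unfolding curve_length_def by (rule SUP_upper)
  then show ?thesis by (simp add: zero_ereal_def)
qed

lemma cl_lip:
  assumes K: "K \<ge> 0" and lip: "\<And>x y. x \<in> {0..1} \<Longrightarrow> y \<in> {0..1} \<Longrightarrow> dist (g x) (g y) \<le> K * \<bar>x - y\<bar>"
  shows "curve_length g \<le> ereal K"
  unfolding curve_length_def
proof (rule SUP_least)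
  fix ts :: "real list" assume "ts \<in> {ts. sorted ts \<and> set ts \<subseteq> {0..1}}"
  then have s: "sorted ts" and st: "set ts \<subseteq> {0..1}" by auto
  show "ereal (\<Sum>i < length ts - 1. dist (g (ts ! i)) (g (ts ! Suc i))) \<le> ereal K"
  proof (cases "ts = []")
    case True then show ?thesis using K by simp
  next
    case False
    define m where "m = length ts - 1"
    have mlt: "m < length ts" using False m_def by (cases ts) auto
    have "(\<Sum>i < m. dist (g (ts ! i)) (g (ts ! Suc i))) \<le> (\<Sum>i < m. K * (ts ! Suc i - ts ! i))"
    proof (rule sum_mono)
      fix i assume "i \<in> {..<m}"
      then have i: "Suc i < length ts" using m_def mlt by auto
      have le: "ts ! i \<le> ts ! Suc i" using s i by (simp add: sorted_iff_nth_mono)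
      have "ts ! i \<in> set ts" "ts ! Suc i \<in> set ts" using i by auto
      then have "ts ! i \<in> {0..1}" "ts ! Suc i \<in> {0..1}" using st by blast+
      then show "dist (g (ts ! i)) (g (ts ! Suc i)) \<le> K * (ts ! Suc i - ts ! i)"
        using lip le by fastforce
    qed
    also have "\<dots> = K * (ts ! m - ts ! 0)"
      by (simp add: sum_distrib_left[symmetric] sum_lessThan_telescope)
    also have "\<dots> \<le> K * 1"
    proof -
      have "ts ! m \<in> set ts" "ts ! 0 \<in> set ts" using mlt by (auto intro!: nth_mem)
      then have "ts ! m \<in> {0..1}" "ts ! 0 \<in> {0..1}" using st by blast+
      then show ?thesis using K by (intro mult_left_mono) auto
    qed
    finally show ?thesis by (simp add: m_def)
  qed
qed



definition lipK :: "real \<Rightarrow> (real \<Rightarrow> complex) \<Rightarrow> bool" where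
  "lipK K g \<longleftrightarrow> K \<ge> 0 \<and> (\<forall>x\<in>{0..1}. \<forall>y\<in>{0..1}. dist (g x) (g y) \<le> K * \<bar>x - y\<bar>)"

lemma lip_linepath: "lipK (cmod (b - a)) (linepath a b)"
  unfolding lipK_def
proof (intro conjI ballI)
  fix x y :: real
  have "linepath a b x - linepath a b y = of_real (x - y) * (b - a)"
    by (simp add: linepath_def scaleR_conv_of_real algebra_simps)
  then have "dist (linepath a b x) (linepath a b y) = cmod (of_real (x - y) * (b - a))"
    by (simp only: dist_norm)
  also have "\<dots> = \<bar>x - y\<bar> * cmod (b - a)" by (simp only: norm_mult norm_of_real)
  finally show "dist (linepath a b x) (linepath a b y) \<le> cmod (b - a) * \<bar>x - y\<bar>"
    by simp
qed simp

lemma lip_join: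
  assumes g: "lipK K g" and h: "lipK K h" and e: "g 1 = h 0"
  shows "lipK (2*K) (g +++ h)"
  unfolding lipK_def
proof (intro conjI ballI)
  show "0 \<le> 2*K" using g by (simp add: lipK_def)
  have K: "K \<ge> 0" using g by (simp add: lipK_def)
  have G: "dist (g x) (g y) \<le> K * \<bar>x - y\<bar>" if "x\<in>{0..1}" "y\<in>{0..1}" for x y using g that by (simp add: lipK_def)
  have H: "dist (h x) (h y) \<le> K * \<bar>x - y\<bar>" if "x\<in>{0..1}" "y\<in>{0..1}" for x y using h that by (simp add: lipK_def)
  have cross: "dist ((g +++ h) x) ((g +++ h) y) \<le> 2 * K * \<bar>x - y\<bar>"
    if "x \<in> {0..1}" "y \<in> {0..1}" "x \<le> 1/2" "\<not> y \<le> 1/2" for x y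
  proof -
    have "dist ((g +++ h) x) ((g +++ h) y) = dist (g (2*x)) (h (2*y-1))"
      using that by (simp add: joinpaths_def)
    also have "\<dots> \<le> dist (g (2*x)) (g 1) + dist (h 0) (h (2*y-1))"
      using dist_triangle[of "g (2*x)" "h (2*y-1)" "g 1"] e by simp
    also have "\<dots> \<le> K * \<bar>2*x - 1\<bar> + K * \<bar>0 - (2*y-1)\<bar>"
      using G[of "2*x" 1] H[of 0 "2*y-1"] that by (intro add_mono) auto
    also have "\<dots> = 2 * K * \<bar>x - y\<bar>" using that by (simp add: algebra_simps abs_if)
    finally show ?thesis .
  qed
  fix x y :: real assume x: "x \<in> {0..1}" and y: "y \<in> {0..1}"
  consider "x \<le> 1/2" "y \<le> 1/2" | "x \<le> 1/2" "\<not> y \<le> 1/2" | "\<not> x \<le> 1/2" "y \<le> 1/2" | "\<not> x \<le> 1/2" "\<not> y \<le> 1/2" by blast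
  then show "dist ((g +++ h) x) ((g +++ h) y) \<le> 2 * K * \<bar>x - y\<bar>"
  proof cases
    case 1
    have "\<bar>2*x - 2*y\<bar> = 2*\<bar>x-y\<bar>" by (simp add: abs_if)
    then show ?thesis using 1 G[of "2*x" "2*y"] x y by (simp add: joinpaths_def)
  next
    case 2 then show ?thesis using cross x y by blast
  next
    case 3 then show ?thesis using cross[of y x] x y by (simp add: dist_commute abs_minus_commute)
  next
    case 4
    have "\<bar>(2*x-1) - (2*y-1)\<bar> = 2*\<bar>x-y\<bar>" by (simp add: abs_if)
    then show ?thesis using 4 H[of "2*x-1" "2*y-1"] x y by (simp add: joinpaths_def)
  qed
qed

lemma lipK_mono: "lipK K g \<Longrightarrow> K \<le> K' \<Longrightarrow> lipK K' g"
  unfolding lipK_def by (meson abs_ge_zero mult_right_mono order.trans)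

fun tourp :: "complex list \<Rightarrow> real \<Rightarrow> complex" where
  "tourp [] = linepath 0 0"
| "tourp [p] = linepath p p"
| "tourp (p # q # ps) = linepath p q +++ tourp (q # ps)"

lemma tourp_props:
  "path (tourp ps) \<and> pathstart (tourp ps) = (if ps = [] then 0 else hd ps)
   \<and> pathfinish (tourp ps) = (if ps = [] then 0 else last ps) \<and> set ps \<subseteq> path_image (tourp ps)
   \<and> (\<exists>K. lipK K (tourp ps))"
proof (induction ps rule: tourp.induct)
  case 1
  have "lipK 0 (\<lambda>x. 0)" by (simp add: lipK_def)
  then show ?case by (auto simp: path_def pathstart_def pathfinish_def)
next
  case (2 p)
  have "lipK 0 (\<lambda>x. p)" by (simp add: lipK_def)
  then show ?case by (auto simp: path_def pathstart_def pathfinish_def path_image_def)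
next
  case (3 p q ps)
  then obtain K where K: "lipK K (tourp (q # ps))" by blast
  define K' where "K' = max K (cmod (q - p))"
  have "lipK K' (tourp (q # ps))" "lipK K' (linepath p q)"
    using K lip_linepath[of q p] lipK_mono unfolding K'_def by auto
  moreover have "linepath p q 1 = tourp (q # ps) 0" using 3 by (simp add: pathstart_def linepath_def)
  ultimately have "lipK (2*K') (tourp (p # q # ps))" by (simp add: lip_join)
  moreover have "set (p # q # ps) \<subseteq> path_image (tourp (p # q # ps))"
    using 3 by (auto simp: path_image_join)
  ultimately show ?case using 3 by auto
qed



definition sepD :: "real \<Rightarrow> complex set \<Rightarrow> bool" where
  "sepD D F \<longleftrightarrow> (\<forall>x\<in>F. \<forall>y\<in>F. x \<noteq> y \<longrightarrow> D \<le> dist x y)"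

lemma sep_bound:
  assumes fin: "finite F" and sub: "F \<subseteq> g ` {0..1}" and D: "D > 0" and sep: "sepD D F"
    and L: "curve_length g = ereal L"
  shows "real (card F) * D \<le> L + D"
proof (cases "F = {}")
  case True
  have "0 \<le> L" using cl_nonneg[of g] L by simp
  then show ?thesis using True D by simp
next
  case False
  have "\<forall>x\<in>F. \<exists>t\<in>{0..1}. g t = x" using sub by auto
  then obtain t where t: "\<And>x. x \<in> F \<Longrightarrow> t x \<in> {0..1} \<and> g (t x) = x" by metis
  define ts where "ts = sorted_list_of_set (t ` F)"
  have fin2: "finite (t ` F)" using fin by simp
  have sts: "set ts = t ` F" "sorted ts" "distinct ts" using fin2 by (auto simp: ts_def)
  have injt: "inj_on t F" by (metis inj_onI t)
  have len: "length ts = card F"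
    using distinct_card[OF sts(3)] sts(1) card_image[OF injt] by simp
  have in01: "set ts \<subseteq> {0..1}" using sts t by auto
  have "ereal (\<Sum>i < length ts - 1. dist (g (ts ! i)) (g (ts ! Suc i))) \<le> curve_length g"
    unfolding curve_length_def by (rule SUP_upper) (use sts in01 in auto)
  then have le: "(\<Sum>i < length ts - 1. dist (g (ts ! i)) (g (ts ! Suc i))) \<le> L" using L by simp
  have "(\<Sum>i < length ts - 1. D) \<le> (\<Sum>i < length ts - 1. dist (g (ts ! i)) (g (ts ! Suc i)))"
  proof (rule sum_mono)
    fix i assume "i \<in> {..<length ts - 1}"
    then have i: "Suc i < length ts" by auto
    have m1: "ts ! i \<in> t ` F" "ts ! Suc i \<in> t ` F" using sts(1) i by (auto intro!: nth_mem)
    then obtain x y where xy: "x \<in> F" "y \<in> F" "ts ! i = t x" "ts ! Suc i = t y" by blast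
    have "ts ! i \<noteq> ts ! Suc i" using sts(3) i by (simp add: nth_eq_iff_index_eq)
    then have "x \<noteq> y" using xy by auto
    then have "D \<le> dist x y" using sep xy by (simp add: sepD_def)
    then show "D \<le> dist (g (ts ! i)) (g (ts ! Suc i))" using xy t by simp
  qed
  then have "real (length ts - 1) * D \<le> L" using le by simp
  moreover have "length ts \<ge> 1" using len False fin by (simp add: Suc_leI card_gt_0_iff)
  ultimately show ?thesis using len by (simp add: of_nat_diff algebra_simps)
qed

lemma net_exists:
  assumes D: "D > 0" and L: "curve_length g = ereal L"
  shows "\<exists>Q. finite Q \<and> Q \<subseteq> g ` {0..1} \<and> real (card Q) * D \<le> L + D \<and>
             (\<forall>x\<in>g ` {0..1}. \<exists>q\<in>Q. dist x q < D)"
proof -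
  define PP where "PP = (\<lambda>F. finite F \<and> F \<subseteq> g ` {0..1} \<and> sepD D F)"
  have P0: "PP {}" by (simp add: PP_def sepD_def)
  have bnd: "\<forall>F. PP F \<longrightarrow> card F < nat \<lceil>(L + D) / D\<rceil> + 1"
  proof (intro allI impI)
    fix F assume "PP F"
    then have "real (card F) * D \<le> L + D" using sep_bound[OF _ _ D _ L] by (auto simp: PP_def)
    then have "real (card F) \<le> (L + D) / D" using D by (simp add: field_simps)
    then have "real (card F) \<le> real (nat \<lceil>(L + D) / D\<rceil>)" by linarith
    then show "card F < nat \<lceil>(L + D) / D\<rceil> + 1" by linarith
  qed
  obtain F where F: "PP F" and mx: "\<And>G. PP G \<Longrightarrow> card G \<le> card F"
    using ex_has_greatest_nat[of PP "{}" card, OF P0 bnd] by blast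
  have cov: "\<forall>x\<in>g ` {0..1}. \<exists>q\<in>F. dist x q < D"
  proof (rule ccontr)
    assume "\<not> ?thesis"
    then obtain x where x: "x \<in> g ` {0..1}" "\<forall>q\<in>F. D \<le> dist x q" by (auto simp: not_less)
    have xF: "x \<notin> F" using x D by force
    have "PP (insert x F)" using F x unfolding PP_def sepD_def by (auto simp: dist_commute)
    then have "card (insert x F) \<le> card F" by (rule mx)
    moreover have "card (insert x F) = Suc (card F)" using F xF by (simp add: PP_def)
    ultimately show False by simp
  qed
  show ?thesis using F cov sep_bound[OF _ _ D _ L, of F] unfolding PP_def by blast
qed



lemma box_meas:
  fixes q :: complex assumes "r \<ge> 0"
  shows "measure lebesgue (cbox (q - Complex r r) (q + Complex r r)) = 4 * r^2"
proof -
  have "q \<in> cbox (q - Complex r r) (q + Complex r r)" using assms by (simp add: mem_box Basis_complex_def)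
  then have ne: "cbox (q - Complex r r) (q + Complex r r) \<noteq> {}" by blast
  have "measure lebesgue (cbox (q - Complex r r) (q + Complex r r)) = measure lborel (cbox (q - Complex r r) (q + Complex r r))"
    by simp
  also have "\<dots> = 4 * r^2" using assms ne by (simp add: Henstock_Kurzweil_Integration.content_cbox_if Basis_complex_def power2_eq_square)
  finally show ?thesis .
qed

lemma class_bound:
  assumes L: "curve_length g = ereal L" and D: "D > 0" and fS: "finite S" and dj: "pairwise disjnt S"
    and H: "\<And>P. P \<in> S \<Longrightarrow> P \<in> sets lebesgue \<and> bounded P \<and> diameter P \<le> 2*D \<and>
              P \<inter> g ` {0..1} \<noteq> {} \<and> a * D^2 \<le> measure lebesgue P"
  shows "real (card S) * a * D \<le> 36 * (L + D)"
proof -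
  obtain Q where Q: "finite Q" "Q \<subseteq> g ` {0..1}" "real (card Q) * D \<le> L + D"
      "\<And>x. x\<in>g ` {0..1} \<Longrightarrow> \<exists>q\<in>Q. dist x q < D"
    using net_exists[OF D L] by blast
  define B where "B = (\<lambda>q. cbox (q - Complex (3*D) (3*D)) (q + Complex (3*D) (3*D)))"
  have sub: "\<Union>S \<subseteq> \<Union>(B ` Q)"
  proof
    fix x assume "x \<in> \<Union>S"
    then obtain P where P: "P \<in> S" "x \<in> P" by blast
    then obtain p where p: "p \<in> P" "p \<in> g ` {0..1}" using H by blast
    have "dist x p \<le> diameter P" using H[OF P(1)] P p by (intro diameter_bounded_bound) auto
    then have xp: "dist x p \<le> 2*D" using H[OF P(1)] by linarith
    obtain q where q: "q \<in> Q" "dist p q < D" using Q(4) p by blast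
    have "dist x q \<le> dist x p + dist p q" by (rule dist_triangle)
    then have d: "cmod (x - q) \<le> 3*D" using xp q by (simp add: dist_norm)
    have "\<bar>Re (x - q)\<bar> \<le> 3*D" "\<bar>Im (x - q)\<bar> \<le> 3*D"
      using abs_Re_le_cmod[of "x-q"] abs_Im_le_cmod[of "x-q"] d by linarith+
    then have "x \<in> B q" unfolding B_def by (auto simp: mem_box Basis_complex_def)
    then show "x \<in> \<Union>(B ` Q)" using q by blast
  qed
  have lm: "P \<in> lmeasurable" if "P \<in> S" for P using H[OF that] by (intro bounded_set_imp_lmeasurable) auto
  have "measure lebesgue (\<Union>S) = (\<Sum>P\<in>S. measure lebesgue P)"
  proof -
    have "measure lebesgue (\<Union>i\<in>S. id i) = (\<Sum>i\<in>S. measure lebesgue (id i))"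
    proof (rule measure_finite_Union)
      show "finite S" by (rule fS)
      show "id ` S \<subseteq> sets lebesgue" using lm by (auto simp: fmeasurable_def)
      show "disjoint_family_on id S" using dj by (auto simp: disjoint_family_on_def pairwise_def disjnt_def)
      fix i assume "i \<in> S"
      then have "i \<in> fmeasurable lebesgue" by (rule lm)
      then show "emeasure lebesgue (id i) \<noteq> \<infinity>" unfolding fmeasurable_def by auto
    qed
    then show ?thesis by simp
  qed
  moreover have "(\<Sum>P\<in>S. measure lebesgue P) \<ge> (\<Sum>P\<in>S. a * D^2)"
    using H by (intro sum_mono) auto
  moreover have "measure lebesgue (\<Union>S) \<le> measure lebesgue (\<Union>(B ` Q))"
  proof (rule measure_mono_fmeasurable[OF sub])
    show "\<Union>S \<in> sets lebesgue" using fS lm by (intro sets.finite_Union) (auto simp: fmeasurable_def)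
    show "\<Union>(B ` Q) \<in> fmeasurable lebesgue"
      using Q(1) by (intro bounded_set_imp_lmeasurable) (auto simp: B_def intro!: sets.finite_UN)
  qed
  moreover have "measure lebesgue (\<Union>(B ` Q)) \<le> (\<Sum>q\<in>Q. measure lebesgue (B q))"
    using Q(1) by (intro measure_UNION_le) (auto simp: B_def)
  moreover have "(\<Sum>q\<in>Q. measure lebesgue (B q)) = real (card Q) * (36 * D^2)"
    using box_meas[of "3*D"] D by (simp add: B_def power2_eq_square)
  ultimately have "real (card S) * a * D^2 \<le> real (card Q) * (36 * D^2)" by (simp add: mult.assoc)
  then have "real (card S) * a * D \<le> real (card Q) * 36 * D" using D by (simp add: power2_eq_square mult.assoc)
  also have "\<dots> \<le> 36 * (L + D)" using Q(3) by simp
  finally show ?thesis .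
qed



lemma polygon_meas:
  assumes "simple_polygon P"
  shows "P \<in> sets lebesgue \<and> bounded P"
proof -
  obtain vs where sp: "simple_path (polypath (vs @ [hd vs]))"
    and P: "P = path_image (polypath (vs @ [hd vs])) \<union> inside (path_image (polypath (vs @ [hd vs])))"
    using assms unfolding simple_polygon_def by blast
  define S where "S = path_image (polypath (vs @ [hd vs]))"
  have cS: "compact S" unfolding S_def using sp by (intro compact_path_image simple_path_imp_path)
  then have bS: "bounded S" and clS: "closed S" by (auto intro: compact_imp_bounded compact_imp_closed)
  have bI: "bounded (inside S)" using bS by (rule bounded_inside)
  have oI: "open (inside S)" using clS by (rule open_inside)
  have m1: "S \<in> sets lebesgue" using lmeasurable_compact[OF cS] by (simp add: fmeasurable_def)
  have m2: "inside S \<in> sets lebesgue" using lmeasurable_open[OF bI oI] by (simp add: fmeasurable_def)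
  show ?thesis using m1 m2 bS bI P S_def by auto
qed

lemma bbox_diam:
  assumes L: "curve_length g = ereal L" and pg: "path g" and sub: "P \<subseteq> bbox (path_image g)"
  shows "diameter P \<le> 2 * L"
proof -
  define S where "S = path_image g"
  have Sne: "S \<noteq> {}" unfolding S_def by (simp add: path_image_def)
  have cS: "compact S" unfolding S_def using pg by (rule compact_path_image)
  then have bS: "bounded S" by (rule compact_imp_bounded)
  have dS: "dist a b \<le> L" if ab: "a \<in> S" "b \<in> S" for a b
  proof -
    obtain s t where "s \<in> {0..1}" "t \<in> {0..1}" "a = g s" "b = g t" using ab unfolding S_def path_image_def by blast
    then show ?thesis using cl_pair[of s t g] L by simp
  qed
  have L0: "0 \<le> L" using cl_nonneg[of g] L by simp
  have "bounded (Re ` S)" "bounded (Im ` S)"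
    using bS bounded_linear_image bounded_linear_Re bounded_linear_Im by blast+
  then have bR: "bdd_below (Re ` S)" "bdd_above (Re ` S)" "bdd_below (Im ` S)" "bdd_above (Im ` S)"
    by (auto intro: bounded_imp_bdd_above bounded_imp_bdd_below)
  have reS: "Sup (Re ` S) \<le> Inf (Re ` S) + L"
  proof -
    have "Re a - L \<le> Inf (Re ` S)" if "a \<in> S" for a
    proof (rule cInf_greatest)
      show "Re ` S \<noteq> {}" using Sne by simp
      fix x assume "x \<in> Re ` S"
      then obtain b where "b \<in> S" "x = Re b" by blast
      then show "Re a - L \<le> x" using dS[OF that \<open>b\<in>S\<close>] abs_Re_le_cmod[of "a - b"] by (simp add: dist_norm)
    qed
    then show ?thesis by (intro cSup_least) (use Sne in force)+
  qed
  have imS: "Sup (Im ` S) \<le> Inf (Im ` S) + L"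
  proof -
    have "Im a - L \<le> Inf (Im ` S)" if "a \<in> S" for a
    proof (rule cInf_greatest)
      show "Im ` S \<noteq> {}" using Sne by simp
      fix x assume "x \<in> Im ` S"
      then obtain b where "b \<in> S" "x = Im b" by blast
      then show "Im a - L \<le> x" using dS[OF that \<open>b\<in>S\<close>] abs_Im_le_cmod[of "a - b"] by (simp add: dist_norm)
    qed
    then show ?thesis by (intro cSup_least) (use Sne in force)+
  qed
  have inb: "Inf (Re ` S) \<le> Re x \<and> Re x \<le> Sup (Re ` S) \<and> Inf (Im ` S) \<le> Im x \<and> Im x \<le> Sup (Im ` S)"
    if "x \<in> P" for x
    using sub that unfolding bbox_def S_def by (auto simp: mem_box Basis_complex_def)
  show ?thesis
  proof (rule diameter_le)
    show "P \<noteq> {} \<or> 0 \<le> 2 * L" using L0 by simp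
    fix x y assume "x \<in> P" "y \<in> P"
    then have "\<bar>Re (x - y)\<bar> \<le> L" "\<bar>Im (x - y)\<bar> \<le> L" using inb[of x] inb[of y] reS imS by auto
    then show "norm (x - y) \<le> 2 * L" using cmod_le[of "x - y"] by simp
  qed
qed

lemma finite_length:
  assumes fin: "finite R" and opt: "optimal_tour R T"
  shows "\<exists>L. curve_length T = ereal L \<and> 0 \<le> L"
proof -
  have "\<forall>P\<in>R. \<exists>x. x \<in> P" using opt by (auto simp: optimal_tour_def is_tour_def)
  then obtain f where f: "\<And>P. P \<in> R \<Longrightarrow> f P \<in> P" by metis
  obtain xs where xs: "set xs = f ` R" using finite_list fin by (metis finite_imageI)
  define qs where "qs = (0 # xs) @ [0]"
  have tp: "path (tourp qs) \<and> pathstart (tourp qs) = (if qs = [] then 0 else hd qs)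
   \<and> pathfinish (tourp qs) = (if qs = [] then 0 else last qs) \<and> set qs \<subseteq> path_image (tourp qs)
   \<and> (\<exists>K. lipK K (tourp qs))" by (rule tourp_props)
  then obtain K where K: "lipK K (tourp qs)" by blast
  have "is_tour R (tourp qs)" unfolding is_tour_def
  proof (intro conjI ballI)
    show "path (tourp qs)" using tp by blast
    show "pathfinish (tourp qs) = pathstart (tourp qs)" using tp by (simp add: qs_def)
    fix P assume "P \<in> R"
    then have "f P \<in> set qs" "f P \<in> P" using xs f by (auto simp: qs_def)
    then show "path_image (tourp qs) \<inter> P \<noteq> {}" using tp by blast
  qed
  then have "curve_length T \<le> curve_length (tourp qs)" using opt by (simp add: optimal_tour_def)
  also have "\<dots> \<le> ereal K" using K by (intro cl_lip) (auto simp: lipK_def)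
  finally have up: "curve_length T \<le> ereal K" .
  have lo: "0 \<le> curve_length T" by (rule cl_nonneg)
  show ?thesis
  proof (cases "curve_length T")
    case (real r) then show ?thesis using lo by (simp add: zero_ereal_def)
  next
    case PInf then show ?thesis using up by simp
  next
    case MInf then show ?thesis using lo by simp
  qed
qed



lemma main_bound:
  fixes a L :: real and K :: nat and S0 :: "complex set set"
  assumes a: "a > 0" and L: "curve_length T = ereal L" and Lp: "L > 0"
    and fS: "finite S0" and dj: "pairwise disjnt S0"
    and H: "\<And>P. P \<in> S0 \<Longrightarrow> P \<in> sets lebesgue \<and> bounded P \<and> diameter P \<le> 2*L \<and>
              P \<inter> T ` {0..1} \<noteq> {} \<and> a * (diameter P)^2 \<le> measure lebesgue P"
  shows "(\<Sum>P\<in>S0. diameter P) \<le> real K * (144 * L / a) + real (card S0) * (2*L/2^K)"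
proof -
  define d where "d = (\<lambda>P::complex set. diameter P)"
  define Sk where "Sk = (\<lambda>k::nat. {P\<in>S0. 2*L/2^(k+1) < d P \<and> d P \<le> 2*L/2^k})"
  define Ssm where "Ssm = {P\<in>S0. d P \<le> 2*L/2^K}"
  have d0: "0 \<le> d P" if "P \<in> S0" for P using H[OF that] diameter_ge_0 d_def by auto
  have pt: "d P \<le> (if d P \<le> 2*L/2^K then d P else 0) +
              (\<Sum>k<K. if 2*L/2^(k+1) < d P \<and> d P \<le> 2*L/2^k then d P else 0)" if P: "P \<in> S0" for P
  proof (cases "d P \<le> 2*L/2^K")
    case True
    have "0 \<le> (\<Sum>k<K. if 2*L/2^(k+1) < d P \<and> d P \<le> 2*L/2^k then d P else 0)"
      using d0[OF P] by (intro sum_nonneg) auto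
    then show ?thesis using True by simp
  next
    case False
    define J where "J = {j. j \<le> K \<and> d P \<le> 2*L/2^j}"
    have J0: "0 \<in> J" using H[OF P] by (simp add: J_def d_def)
    have fJ: "finite J" by (simp add: J_def)
    define k where "k = Max J"
    have kJ: "k \<in> J" using J0 fJ k_def Max_in by blast
    have kK: "k \<noteq> K" using kJ False by (auto simp: J_def)
    then have kK': "k < K" using kJ by (auto simp: J_def)
    have "Suc k \<notin> J" using Max_ge[OF fJ] k_def by fastforce
    then have "2*L/2^(k+1) < d P" using kK' by (auto simp: J_def)
    then have inS: "2*L/2^(k+1) < d P \<and> d P \<le> 2*L/2^k" using kJ by (simp add: J_def)
    have "d P \<le> (\<Sum>k<K. if 2*L/2^(k+1) < d P \<and> d P \<le> 2*L/2^k then d P else 0)"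
      using member_le_sum[of k "{..<K}" "\<lambda>k. if 2*L/2^(k+1) < d P \<and> d P \<le> 2*L/2^k then d P else 0"]
        kK' inS d0[OF P] by auto
    then show ?thesis using False by simp
  qed
  have "(\<Sum>P\<in>S0. d P) \<le> (\<Sum>P\<in>S0. (if d P \<le> 2*L/2^K then d P else 0) +
              (\<Sum>k<K. if 2*L/2^(k+1) < d P \<and> d P \<le> 2*L/2^k then d P else 0))"
    using pt by (rule sum_mono)
  also have "\<dots> = sum d Ssm + (\<Sum>k<K. sum d (Sk k))"
    by (simp add: sum.distrib sum.swap[of _ "{..<K}" S0] sum.inter_filter fS Ssm_def Sk_def)
  finally have splt: "(\<Sum>P\<in>S0. d P) \<le> sum d Ssm + (\<Sum>k<K. sum d (Sk k))" .
  have small: "sum d Ssm \<le> real (card S0) * (2*L/2^K)"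
  proof -
    have "sum d Ssm \<le> (\<Sum>P\<in>Ssm. 2*L/2^K)" by (intro sum_mono) (auto simp: Ssm_def)
    also have "\<dots> = real (card Ssm) * (2*L/2^K)" by simp
    also have "\<dots> \<le> real (card S0) * (2*L/2^K)"
      using Lp fS by (intro mult_right_mono) (auto simp: Ssm_def intro!: card_mono)
    finally show ?thesis .
  qed
  have cls: "sum d (Sk k) \<le> 144 * L / a" for k
  proof -
    define D where "D = L / 2^k"
    have Dp: "D > 0" using Lp by (simp add: D_def)
    have DL: "D \<le> L" using Lp by (simp add: D_def field_simps)
    have e1: "2*L/2^(k+1) = D" "2*L/2^k = 2*D" by (simp_all add: D_def)
    have fk: "finite (Sk k)" using fS by (simp add: Sk_def)
    have cb: "real (card (Sk k)) * a * D \<le> 36 * (L + D)"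
    proof (rule class_bound[OF L Dp fk])
      show "pairwise disjnt (Sk k)" using dj by (rule pairwise_subset) (auto simp: Sk_def)
      fix P assume P: "P \<in> Sk k"
      then have P0: "P \<in> S0" and dP: "D < d P" "d P \<le> 2*D" using e1 by (auto simp: Sk_def)
      have "a * D^2 \<le> a * (d P)^2" using a Dp dP by (intro mult_left_mono power_mono) auto
      then show "P \<in> sets lebesgue \<and> bounded P \<and> diameter P \<le> 2*D \<and>
              P \<inter> T ` {0..1} \<noteq> {} \<and> a * D^2 \<le> measure lebesgue P"
        using H[OF P0] dP by (auto simp: d_def)
    qed
    have "sum d (Sk k) \<le> (\<Sum>P\<in>Sk k. 2*D)" using e1 by (intro sum_mono) (auto simp: Sk_def)
    also have "\<dots> = real (card (Sk k)) * (2*D)" by simp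
    also have "\<dots> \<le> 144 * L / a"
    proof -
      have "36 * (L + D) \<le> 72 * L" using DL by simp
      then have "real (card (Sk k)) * a * D \<le> 72 * L" using cb by (rule order_trans[rotated])
      then have "real (card (Sk k)) * D \<le> 72 * L / a" using a by (simp add: field_simps)
      then show ?thesis by simp
    qed
    finally show ?thesis .
  qed
  have "(\<Sum>k<K. sum d (Sk k)) \<le> (\<Sum>k<K. 144 * L / a)" using cls by (intro sum_mono) auto
  then show ?thesis using splt small by (simp add: d_def)
qed



theorem lemma2p6:
  fixes \<alpha> :: real
  assumes "\<alpha> > 0"
  shows "\<exists>C>0. \<forall>(R :: complex set set) (\<epsilon> :: real) (T :: real \<Rightarrow> complex).
     finite R \<and> pairwise disjnt R \<and>
     (\<forall>P\<in>R. simple_polygon P \<and> connected P \<and> fat \<alpha> P) \<and>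
     0 < \<epsilon> \<and> \<epsilon> < 1 \<and> optimal_tour R T \<longrightarrow>
     real_of_ereal (curve_length T) \<ge>
       C * (\<Sum>P\<in>{P\<in>R. P \<subseteq> bbox (path_image T)}. diameter P) / ln (real (card R) / \<epsilon>)"
proof -
  have a: "\<alpha> > 0" by (rule assms)
  define C where "C = ln 2 / (288 / \<alpha> + 2)"
  have "288 / \<alpha> + 2 > 0" using a by (simp add: add_pos_pos)
  then have Cp: "C > 0" by (simp add: C_def)
  show ?thesis
  proof (intro exI[of _ C] conjI allI impI Cp)
    fix R :: "complex set set" and \<epsilon> :: real and T :: "real \<Rightarrow> complex"
    assume A: "finite R \<and> pairwise disjnt R \<and> (\<forall>P\<in>R. simple_polygon P \<and> connected P \<and> fat \<alpha> P) \<and>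
     0 < \<epsilon> \<and> \<epsilon> < 1 \<and> optimal_tour R T"
    then have fR: "finite R" and dj: "pairwise disjnt R" and reg: "\<And>P. P \<in> R \<Longrightarrow> simple_polygon P \<and> fat \<alpha> P"
      and e: "0 < \<epsilon>" "\<epsilon> < 1" and opt: "optimal_tour R T" by auto
    have tour: "is_tour R T" using opt by (simp add: optimal_tour_def)
    then have pT: "path T" and hit: "\<And>P. P \<in> R \<Longrightarrow> path_image T \<inter> P \<noteq> {}" by (auto simp: is_tour_def)
    obtain L where L: "curve_length T = ereal L" and L0: "0 \<le> L" using finite_length[OF fR opt] by blast
    define S0 where "S0 = {P\<in>R. P \<subseteq> bbox (path_image T)}"
    define lam where "lam = (\<Sum>P\<in>S0. diameter P)"
    define n where "n = card R"
    have fS: "finite S0" using fR by (simp add: S0_def)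
    have H: "P \<in> sets lebesgue \<and> bounded P \<and> diameter P \<le> 2*L \<and>
              P \<inter> T ` {0..1} \<noteq> {} \<and> \<alpha> * (diameter P)^2 \<le> measure lebesgue P" if P: "P \<in> S0" for P
    proof -
      have PR: "P \<in> R" and sb: "P \<subseteq> bbox (path_image T)" using P by (auto simp: S0_def)
      show ?thesis using polygon_meas[of P] reg[OF PR] hit[OF PR] bbox_diam[OF L pT sb]
        by (auto simp: fat_def path_image_def)
    qed
    have lam0: "0 \<le> lam" unfolding lam_def using H diameter_ge_0 by (intro sum_nonneg) auto
    have goal: "C * lam / ln (real n / \<epsilon>) \<le> L"
    proof (cases "L = 0 \<or> n = 0")
      case True
      have "lam = 0"
      proof (cases "L = 0")
        case True
        have "lam \<le> (\<Sum>P\<in>S0. 0)" unfolding lam_def using H True by (intro sum_mono) auto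
        then show ?thesis using lam0 by simp
      next
        case False
        then have "n = 0" using \<open>L = 0 \<or> n = 0\<close> by simp
        then have "R = {}" using fR by (simp add: n_def)
        then show ?thesis by (simp add: lam_def S0_def)
      qed
      then show ?thesis using L0 by simp
    next
      case False
      then have Lp: "L > 0" and n1: "n \<ge> 1" using L0 by auto
      have n2: "n \<ge> 2"
      proof (rule ccontr)
        assume "\<not> n \<ge> 2"
        then have "n = 1" using n1 by simp
        then have "card R = 1" by (simp add: n_def)
        then obtain P where RP: "R = {P}" by (rule card_1_singletonE)
        have "path_image T \<inter> P \<noteq> {}" using hit RP by simp
        then obtain x where x: "x \<in> P" by blast
        have "is_tour R (\<lambda>t. x)" unfolding is_tour_def
        proof (intro conjI ballI)
          show "path (\<lambda>t. x)" by (rule path_const)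
          show "pathfinish (\<lambda>t. x) = pathstart (\<lambda>t. x)" by (simp add: pathfinish_def pathstart_def)
          fix P' assume "P' \<in> R"
          then have "P' = P" using RP by simp
          moreover have "x \<in> path_image (\<lambda>t. x)" by (simp add: path_image_def)
          ultimately show "path_image (\<lambda>t. x) \<inter> P' \<noteq> {}" using x by blast
        qed
        then have "curve_length T \<le> curve_length (\<lambda>t. x)" using opt by (simp add: optimal_tour_def)
        also have "\<dots> \<le> ereal 0" by (rule cl_lip) auto
        finally show False using L Lp by simp
      qed
      define q where "q = real n / \<epsilon>"
      have q2: "q > 2"
      proof -
        have "real n / \<epsilon> > real n" using e n1 by (simp add: field_simps)
        then show ?thesis using n2 by (simp add: q_def)
      qed
      define lg where "lg = log 2 q"
      have lg1: "lg > 1" using q2 by (simp add: lg_def)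
      define K where "K = nat \<lceil>lg\<rceil>"
      have Kge: "real K \<ge> lg" using K_def by linarith
      have Kle: "real K \<le> 2 * lg" using K_def lg1 by linarith
      have pw: "(2::real)^K \<ge> q"
      proof -
        have "q = 2 powr lg" using q2 by (simp add: lg_def)
        also have "\<dots> \<le> 2 powr (real K)" using Kge by (intro powr_mono) auto
        also have "\<dots> = 2^K" by (simp add: powr_realpow)
        finally show ?thesis .
      qed
      have dj0: "pairwise disjnt S0" using dj by (rule pairwise_subset) (auto simp: S0_def)
      have mb: "lam \<le> real K * (144 * L / \<alpha>) + real (card S0) * (2*L/2^K)"
        unfolding lam_def by (rule main_bound[OF a L Lp fS dj0 H])
      have "real (card S0) * (2*L/2^K) \<le> real n * (2*L/2^K)"
        using Lp fR by (intro mult_right_mono) (auto simp: S0_def n_def intro!: card_mono)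
      also have "\<dots> = 2 * L * (real n / 2^K)" by simp
      also have "\<dots> \<le> 2 * L * \<epsilon>"
      proof -
        have "real n / 2^K \<le> \<epsilon>" using pw e q_def by (simp add: field_simps)
        then show ?thesis using Lp by (intro mult_left_mono) auto
      qed
      also have "\<dots> \<le> 2 * L * lg" using e lg1 Lp by simp
      finally have sm: "real (card S0) * (2*L/2^K) \<le> 2 * L * lg" .
      have "real K * (144 * L / \<alpha>) \<le> 2 * lg * (144 * L / \<alpha>)"
        using Kle Lp a by (intro mult_right_mono) auto
      then have "lam \<le> 2 * lg * (144 * L / \<alpha>) + 2 * L * lg" using mb sm by linarith
      moreover have "2 * lg * (144 * L / \<alpha>) + 2 * L * lg = (288 / \<alpha> + 2) * L * lg"
        using a by (simp add: field_simps)
      ultimately have "lam \<le> (288 / \<alpha> + 2) * L * lg" by simp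
      moreover have lgq: "lg = ln q / ln 2" by (simp add: lg_def log_def)
      ultimately have lamb: "lam \<le> (288 / \<alpha> + 2) * L * ln q / ln 2" by simp
      have lnq: "ln q > 0" using q2 by simp
      define c where "c = 288 / \<alpha> + 2"
      have cp: "c > 0" using a by (simp add: c_def add_pos_pos)
      have l2: "ln (2::real) > 0" by simp
      have "C * lam \<le> C * (c * L * ln q / ln 2)"
        using lamb Cp by (intro mult_left_mono) (auto simp: c_def)
      also have "\<dots> = L * ln q" using cp l2 by (simp add: C_def c_def[symmetric])
      finally have "C * lam \<le> L * ln q" .
      then have "C * lam / ln q \<le> L" using lnq by (simp add: pos_divide_le_eq)
      then show ?thesis by (simp add: q_def)
    qed
    show "C * (\<Sum>P\<in>{P\<in>R. P \<subseteq> bbox (path_image T)}. diameter P) / ln (real (card R) / \<epsilon>)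
          \<le> real_of_ereal (curve_length T)"
      using goal L by (simp add: lam_def S0_def n_def)
  qed
qed

end
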